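(* Let $L$ be a finite-dimensional Lie algebra over a field $F$ and let $S$ and $T$ be subalgebras of $L$ which are nil on $L$. Assume that $[S,T]\subseteq T$. Then $S+T$ is nil on $L$.
   Context: A subalgebra $S$ of $L$ is nil on $L$ if $\mathrm{ad}_L x$ is nilpotent for every $x\in S$. *)

theory Defs
  imports Complex_Main
begin

definition lie_algebra ::
  "('f::field \<Rightarrow> 'v::ab_group_add \<Rightarrow> 'v) \<Rightarrow> ('v \<Rightarrow> 'v \<Rightarrow> 'v) \<Rightarrow> bool" where
  "lie_algebra scale br \<longleftrightarrow>
     vector_space scale \<and>
     (\<forall>x y z. br (x + y) z = br x z + br y z) \<and>
     (\<forall>x y z. br x (y + z) = br x y + br x z) \<and>
     (\<forall>a x y. br (scale a x) y = scale a (br x y)) \<and>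
     (\<forall>a x y. br x (scale a y) = scale a (br x y)) \<and>
     (\<forall>x. br x x = 0) \<and>
     (\<forall>x y z. br x (br y z) + br y (br z x) + br z (br x y) = 0)"

definition finite_dim_lie_algebra ::
  "('f::field \<Rightarrow> 'v::ab_group_add \<Rightarrow> 'v) \<Rightarrow> ('v \<Rightarrow> 'v \<Rightarrow> 'v) \<Rightarrow> bool" where
  "finite_dim_lie_algebra scale br \<longleftrightarrow>
     lie_algebra scale br \<and> (\<exists>B. finite B \<and> module.span scale B = UNIV)"

definition lie_subalgebra ::
  "('f::field \<Rightarrow> 'v::ab_group_add \<Rightarrow> 'v) \<Rightarrow> ('v \<Rightarrow> 'v \<Rightarrow> 'v) \<Rightarrow> 'v set \<Rightarrow> bool" where
  "lie_subalgebra scale br S \<longleftrightarrow>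
     module.subspace scale S \<and> (\<forall>x\<in>S. \<forall>y\<in>S. br x y \<in> S)"

definition ad :: "('v \<Rightarrow> 'v \<Rightarrow> 'v) \<Rightarrow> 'v \<Rightarrow> 'v \<Rightarrow> 'v" where
  "ad br x = br x"

definition nil_on :: "('v::zero \<Rightarrow> 'v \<Rightarrow> 'v) \<Rightarrow> 'v set \<Rightarrow> bool" where
  "nil_on br S \<longleftrightarrow> (\<forall>x\<in>S. \<exists>n. (ad br x ^^ n) = (\<lambda>_. 0))"

definition lie_bracket_set ::
  "('f::field \<Rightarrow> 'v::ab_group_add \<Rightarrow> 'v) \<Rightarrow> ('v \<Rightarrow> 'v \<Rightarrow> 'v) \<Rightarrow> 'v set \<Rightarrow> 'v set \<Rightarrow> 'v set" where
  "lie_bracket_set scale br S T = module.span scale {br s t | s t. s \<in> S \<and> t \<in> T}"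

definition set_sum :: "'v::plus set \<Rightarrow> 'v set \<Rightarrow> 'v set" where
  "set_sum S T = {s + t | s t. s \<in> S \<and> t \<in> T}"

end

theory Submission
  imports Defs
begin

locale fdla = finite_dimensional_vector_space scale Basis
  for scale :: "'f::field \<Rightarrow> 'v::ab_group_add \<Rightarrow> 'v" and Basis :: "'v set" +
  fixes br :: "'v \<Rightarrow> 'v \<Rightarrow> 'v"
  assumes addl: "br (x + y) z = br x z + br y z"
    and addr: "br x (y + z) = br x y + br x z"
    and scl: "br (scale a x) y = scale a (br x y)"
    and scr: "br x (scale a y) = scale a (br x y)"
    and self0: "br x x = 0"
    and jac: "br x (br y z) + br y (br z x) + br z (br x y) = 0"
begin

lemma zl[simp]: "br 0 y = 0"
  using addl[of 0 0 y] by simp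
lemma zr[simp]: "br y 0 = 0"
  using addr[of y 0 0] by simp
lemma negl: "br (- x) y = - br x y"
  using addl[of x "-x" y] by (simp add: eq_neg_iff_add_eq_0 add.commute)
lemma negr: "br y (- x) = - br y x"
  using addr[of y x "-x"] by (simp add: eq_neg_iff_add_eq_0 add.commute)
lemma diffl: "br (x - y) z = br x z - br y z"
  using addl[of x "-y" z] negl by simp
lemma diffr: "br z (x - y) = br z x - br z y"
  using addr[of z x "-y"] negr by simp
lemma anti: "br x y = - br y x"
proof -
  have "0 = br (x+y) (x+y)" using self0 by simp
  also have "\<dots> = br x x + br x y + (br y x + br y y)" by (simp add: addl addr)
  also have "\<dots> = br x y + br y x" by (simp add: self0)
  finally show ?thesis by (metis eq_neg_iff_add_eq_0)
qed
lemma jac2: "br m (br x w) = br x (br m w) - br (br x m) w"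
proof -
  have "br m (br x w) + br x (br w m) + br w (br m x) = 0" by (rule jac)
  moreover have "br x (br w m) = - br x (br m w)" using anti[of w m] negr by simp
  moreover have "br w (br m x) = br (br x m) w" using anti[of w "br m x"] anti[of m x] negl by simp
  ultimately show ?thesis by (simp add: algebra_simps)
qed

definition subalg where "subalg K \<longleftrightarrow> subspace K \<and> (\<forall>x\<in>K. \<forall>y\<in>K. br x y \<in> K)"
definition nilp where "nilp x \<longleftrightarrow> (\<exists>n. (br x ^^ n) = (\<lambda>_. 0))"

lemma subalg_sub: "subalg K \<Longrightarrow> subspace K" by (simp add: subalg_def)

lemma psub_dim: "subspace A \<Longrightarrow> subspace B \<Longrightarrow> A \<subset> B \<Longrightarrow> dim A < dim B"
proof -
  assume a: "subspace A" "subspace B" "A \<subset> B"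
  then have "span A = A" "span B = B" by simp_all
  then show ?thesis using a dim_psubset[of A B] by metis
qed

lemma nil_step:
  assumes "\<forall>w\<in>W0. f w \<in> W0"
  shows "w1 \<in> W0 \<Longrightarrow> w1 \<notin> U \<Longrightarrow> (f^^n) w1 \<in> U \<Longrightarrow> \<exists>w\<in>W0. w \<notin> U \<and> f w \<in> U"
proof (induction n arbitrary: w1)
  case 0
  then show ?case by simp
next
  case (Suc n)
  show ?case
  proof (cases "f w1 \<in> U")
    case True
    then show ?thesis using Suc by blast
  next
    case False
    have "(f^^n) (f w1) \<in> U" using Suc.prems(3) by (simp add: funpow_Suc_right del: funpow.simps)
    then show ?thesis using Suc.IH[of "f w1"] Suc.prems assms False by blast
  qed
qed

lemma EL:
  "\<lbrakk>subalg K; \<forall>k\<in>K. nilp k; subspace U; subspace W; U \<subset> W;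
    \<forall>k\<in>K. \<forall>w\<in>W. br k w \<in> W; \<forall>k\<in>K. \<forall>u\<in>U. br k u \<in> U\<rbrakk>
   \<Longrightarrow> \<exists>w\<in>W. w \<notin> U \<and> (\<forall>k\<in>K. br k w \<in> U)"
proof (induction "dim K" arbitrary: K U W rule: less_induct)
  case less
  have sK: "subspace K" using less.prems(1) by (simp add: subalg_def)
  show ?case
  proof (cases "K \<subseteq> {0}")
    case True
    from less.prems(5) obtain w where "w\<in>W" "w\<notin>U" by blast
    then show ?thesis using True subspace_0[OF less.prems(3)] by (intro bexI[of _ w]) auto
  next
    case False
    define P where "P = (\<lambda>M. subalg M \<and> M \<subset> K)"
    have P0: "P {0}" using False subspace_0[OF sK] by (auto simp: P_def subalg_def)
    have Pb: "\<forall>M. P M \<longrightarrow> dim M < Suc dimension" using dim_subset_UNIV by (simp add: le_imp_less_Suc)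
    obtain M where PM: "P M" and Mmax: "\<forall>M'. P M' \<longrightarrow> dim M' \<le> dim M"
      using ex_has_greatest_nat[OF P0 Pb] by blast
    have aM: "subalg M" and MK: "M \<subset> K" using PM by (auto simp: P_def)
    have sM: "subspace M" using aM by (simp add: subalg_def)
    have dimlt: "dim M < dim K" using psub_dim sM sK MK by simp
    have nilM: "\<forall>k\<in>M. nilp k" using less.prems(2) MK by auto
    have "\<exists>w\<in>K. w \<notin> M \<and> (\<forall>k\<in>M. br k w \<in> M)"
      apply (rule less.hyps[OF dimlt aM nilM sM sK MK])
      using less.prems(1) MK aM by (auto simp: subalg_def)
    then obtain x where xK: "x\<in>K" and xM: "x\<notin>M" and xn0: "\<forall>m\<in>M. br m x \<in> M" by blast
    have xn: "\<forall>m\<in>M. br x m \<in> M" using xn0 anti subspace_neg[OF sM] by metis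
    define M' where "M' = {m + scale c x | m c. m \<in> M}"
    have sM': "subspace M'"
    proof (rule subspaceI)
      show "0 \<in> M'" unfolding M'_def using subspace_0[OF sM] by (auto intro!: exI[of _ 0])
    next
      fix a b assume "a \<in> M'" "b \<in> M'"
      then obtain m1 c1 m2 c2 where "a = m1 + scale c1 x" "b = m2 + scale c2 x" "m1\<in>M" "m2\<in>M"
        unfolding M'_def by blast
      then have "a + b = (m1 + m2) + scale (c1 + c2) x" "m1 + m2 \<in> M"
        using subspace_add[OF sM] by (auto simp: scale_left_distrib algebra_simps)
      then show "a + b \<in> M'" unfolding M'_def by blast
    next
      fix c a assume "a \<in> M'"
      then obtain m1 c1 where "a = m1 + scale c1 x" "m1\<in>M" unfolding M'_def by blast
      then have "scale c a = scale c m1 + scale (c * c1) x" "scale c m1 \<in> M"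
        using subspace_scale[OF sM] by (auto simp: scale_right_distrib)
      then show "scale c a \<in> M'" unfolding M'_def by blast
    qed
    have aM': "subalg M'"
    proof -
      have "br a b \<in> M'" if ab0: "a \<in> M'" "b \<in> M'" for a b
      proof -
        obtain m1 c1 m2 c2 where ab: "a = m1 + scale c1 x" "b = m2 + scale c2 x" "m1\<in>M" "m2\<in>M"
          using ab0 unfolding M'_def by blast
        have "br a b = br m1 m2 + scale c2 (br m1 x) + scale c1 (br x m2)"
          unfolding ab by (simp add: addl addr scl scr self0 algebra_simps)
        also have "\<dots> \<in> M" using ab aM xn0 xn subspace_add[OF sM] subspace_scale[OF sM]
          by (simp add: self0 subalg_def)
        finally have "br a b \<in> M" .
        then have "br a b + scale 0 x \<in> M'" unfolding M'_def by blast
        then show ?thesis by simp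
      qed
      then show ?thesis using sM' by (simp add: subalg_def)
    qed
    have MM': "M \<subset> M'"
    proof -
      have "M \<subseteq> M'" unfolding M'_def by (force intro: exI[of _ 0])
      moreover have "x \<in> M'" unfolding M'_def using subspace_0[OF sM]
        by (auto intro!: exI[of _ 0] exI[of _ 1])
      ultimately show ?thesis using xM by blast
    qed
    have M'K: "M' \<subseteq> K" unfolding M'_def
      using subspace_add[OF sK] subspace_scale[OF sK] MK xK by blast
    have M'eq: "M' = K"
    proof (rule ccontr)
      assume "M' \<noteq> K"
      then have "P M'" using aM' M'K by (auto simp: P_def)
      then have "dim M' \<le> dim M" using Mmax by blast
      moreover have "dim M < dim M'" using psub_dim sM sM' MM' by simp
      ultimately show False by simp
    qed
    define W0 where "W0 = {w\<in>W. \<forall>m\<in>M. br m w \<in> U}"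
    have "\<exists>w\<in>W. w \<notin> U \<and> (\<forall>k\<in>M. br k w \<in> U)"
      apply (rule less.hyps[OF dimlt aM nilM less.prems(3,4,5)])
      using less.prems(6,7) MK by auto
    then obtain w1 where w1: "w1 \<in> W0" "w1 \<notin> U" unfolding W0_def by blast
    have inv: "\<forall>w\<in>W0. br x w \<in> W0"
    proof
      fix w assume w: "w \<in> W0"
      have "br x w \<in> W" using w xK less.prems(6) by (auto simp: W0_def)
      moreover have "br m (br x w) \<in> U" if m: "m \<in> M" for m
      proof -
        have "br m (br x w) = br x (br m w) - br (br x m) w" by (rule jac2)
        moreover have "br x (br m w) \<in> U" using w m xK less.prems(7) by (auto simp: W0_def)
        moreover have "br (br x m) w \<in> U" using w m xn by (auto simp: W0_def)
        ultimately show ?thesis using subspace_diff[OF less.prems(3)] by simp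
      qed
      ultimately show "br x w \<in> W0" by (simp add: W0_def)
    qed
    obtain n where n: "(br x ^^ n) = (\<lambda>_. 0)" using less.prems(2) xK by (auto simp: nilp_def)
    have "(br x ^^ n) w1 \<in> U" using n subspace_0[OF less.prems(3)] by simp
    then obtain w where w: "w \<in> W0" "w \<notin> U" "br x w \<in> U"
      using nil_step[OF inv w1] by blast
    have "br k w \<in> U" if kK: "k \<in> K" for k
    proof -
      obtain m c where k: "k = m + scale c x" "m \<in> M" using kK M'eq unfolding M'_def by blast
      have "br k w = br m w + scale c (br x w)" unfolding k by (simp add: addl scl)
      moreover have "br m w \<in> U" using w k by (auto simp: W0_def)
      ultimately show ?thesis using w subspace_add[OF less.prems(3)] subspace_scale[OF less.prems(3)] by simp
    qed
    then show ?thesis using w by (auto simp: W0_def)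
  qed
qed


primrec Vf :: "'v set \<Rightarrow> nat \<Rightarrow> 'v set" where
  "Vf T 0 = {0}"
| "Vf T (Suc i) = {w. \<forall>t\<in>T. br t w \<in> Vf T i}"

lemma Vsub: "subspace (Vf T i)"
proof (induction i)
  case 0 then show ?case by simp
next
  case (Suc i)
  show ?case
  proof (rule subspaceI)
    show "0 \<in> Vf T (Suc i)" using subspace_0[OF Suc.IH] by simp
  next
    fix x y assume "x \<in> Vf T (Suc i)" "y \<in> Vf T (Suc i)"
    then show "x + y \<in> Vf T (Suc i)" using subspace_add[OF Suc.IH] by (simp add: addr)
  next
    fix c x assume "x \<in> Vf T (Suc i)"
    then show "scale c x \<in> Vf T (Suc i)" using subspace_scale[OF Suc.IH] by (simp add: scr)
  qed
qed

lemma Vmono: "Vf T i \<subseteq> Vf T (Suc i)"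
proof (induction i)
  case 0 then show ?case by simp
next
  case (Suc i)
  then show ?case by auto
qed

lemma Vinv: "t \<in> T \<Longrightarrow> w \<in> Vf T i \<Longrightarrow> br t w \<in> Vf T i"
  using Vmono[of T i] by auto

lemma Vfull:
  assumes "subalg T" "\<forall>t\<in>T. nilp t"
  shows "Vf T i = UNIV \<or> i \<le> dim (Vf T i)"
proof (induction i)
  case 0 then show ?case by simp
next
  case (Suc i)
  show ?case
  proof (cases "Vf T (Suc i) = UNIV")
    case True then show ?thesis by simp
  next
    case False
    then have ne: "Vf T i \<noteq> UNIV" using Vmono[of T i] by auto
    then have ile: "i \<le> dim (Vf T i)" using Suc.IH by simp
    have "\<exists>w\<in>UNIV. w \<notin> Vf T i \<and> (\<forall>k\<in>T. br k w \<in> Vf T i)"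
      apply (rule EL[OF assms Vsub subspace_UNIV])
      using ne Vinv by auto
    then obtain w where "w \<notin> Vf T i" "w \<in> Vf T (Suc i)" by auto
    then have "Vf T i \<subset> Vf T (Suc i)" using Vmono[of T i] by auto
    then have "dim (Vf T i) < dim (Vf T (Suc i))" using psub_dim Vsub by blast
    then show ?thesis using ile by simp
  qed
qed

lemma Vtop:
  assumes "subalg T" "\<forall>t\<in>T. nilp t"
  shows "Vf T (Suc dimension) = UNIV"
  using Vfull[OF assms, of "Suc dimension"] dim_subset_UNIV[of "Vf T (Suc dimension)"] by auto

lemma sinv:
  assumes "\<forall>t\<in>T. br s t \<in> T"
  shows "w \<in> Vf T i \<Longrightarrow> br s w \<in> Vf T i"
proof (induction i arbitrary: w)
  case 0 then show ?case by simp
next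
  case (Suc i)
  have "br t (br s w) \<in> Vf T i" if t: "t \<in> T" for t
  proof -
    have "br t (br s w) = br s (br t w) - br (br s t) w" by (rule jac2)
    moreover have "br s (br t w) \<in> Vf T i" using Suc t by simp
    moreover have "br (br s t) w \<in> Vf T i" using Suc.prems t assms by simp
    ultimately show ?thesis using subspace_diff[OF Vsub] by simp
  qed
  then show ?case by simp
qed

lemma powinv:
  assumes "\<forall>t\<in>T. br s t \<in> T"
  shows "w \<in> Vf T k \<Longrightarrow> (br s ^^ j) w \<in> Vf T k"
  by (induction j) (auto intro: sinv[OF assms])

lemma final:
  assumes aT: "subalg T" and nT: "\<forall>t\<in>T. nilp t" and ns: "nilp s"
    and st: "\<forall>t\<in>T. br s t \<in> T" and tT: "t \<in> T"
  shows "\<exists>n. (br (s + t) ^^ n) = (\<lambda>_. 0)"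
proof -
  define g where "g = br (s + t)"
  have geq: "g z = br s z + br t z" for z unfolding g_def by (simp add: addl)
  obtain m where m: "(br s ^^ m) = (\<lambda>_. 0)" using ns by (auto simp: nilp_def)
  have step1: "(g^^j) w - (br s ^^ j) w \<in> Vf T i" if w: "w \<in> Vf T (Suc i)" for w i j
  proof (induction j)
    case 0 then show ?case using subspace_0[OF Vsub] by simp
  next
    case (Suc j)
    define z where "z = (g^^j) w"
    define y where "y = (br s ^^ j) w"
    have y: "y \<in> Vf T (Suc i)" unfolding y_def using powinv[OF st w] .
    have zy: "z - y \<in> Vf T i" using Suc unfolding z_def y_def .
    have "z = y + (z - y)" by simp
    moreover have "z - y \<in> Vf T (Suc i)" using zy Vmono by blast
    ultimately have z: "z \<in> Vf T (Suc i)" using subspace_add[OF Vsub y] by metis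
    have "(g^^Suc j) w - (br s ^^ Suc j) w = g z - br s y" unfolding z_def y_def by simp
    also have "\<dots> = br s (z - y) + br t z" by (simp add: geq diffr algebra_simps)
    also have "\<dots> \<in> Vf T i"
      using sinv[OF st zy] z tT subspace_add[OF Vsub] by simp
    finally show ?case .
  qed
  have step2: "(g^^m) w \<in> Vf T i" if "w \<in> Vf T (Suc i)" for w i
    using step1[OF that, of m] m by simp
  have step3: "w \<in> Vf T i \<Longrightarrow> (g^^(m*i)) w \<in> Vf T 0" for w i
  proof (induction i arbitrary: w)
    case 0 then show ?case by simp
  next
    case (Suc i)
    have e: "m * Suc i = m*i + m" by simp
    have "(g^^(m*Suc i)) w = (g^^(m*i)) ((g^^m) w)"
      by (simp only: e funpow_add o_apply)
    then show ?case using Suc.IH[OF step2[OF Suc.prems]] by simp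
  qed
  have "(g^^(m * Suc dimension)) = (\<lambda>_. 0)"
  proof
    fix w
    have "w \<in> Vf T (Suc dimension)" using Vtop[OF aT nT] by simp
    then show "(g^^(m * Suc dimension)) w = 0" using step3 by fastforce
  qed
  then show ?thesis unfolding g_def by blast
qed

end

theorem lemma4p1:
  fixes scale :: "'f::field \<Rightarrow> 'v::ab_group_add \<Rightarrow> 'v"
    and br :: "'v \<Rightarrow> 'v \<Rightarrow> 'v"
    and S T :: "'v set"
  assumes "finite_dim_lie_algebra scale br"
    and "lie_subalgebra scale br S" and "nil_on br S"
    and "lie_subalgebra scale br T" and "nil_on br T"
    and "lie_bracket_set scale br S T \<subseteq> T"
  shows "nil_on br (set_sum S T)"
proof -
  have L: "lie_algebra scale br" and fin: "\<exists>B. finite B \<and> module.span scale B = UNIV"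
    using assms(1) by (auto simp: finite_dim_lie_algebra_def)
  have vs: "vector_space scale" using L by (simp add: lie_algebra_def)
  obtain B where B: "finite B" "module.span scale B = UNIV" using fin by blast
  obtain B' where B': "B' \<subseteq> B" "\<not> module.dependent scale B'" "B \<subseteq> module.span scale B'"
    using vector_space.maximal_independent_subset[OF vs, of B] by blast
  have fB': "finite B'" using B' B finite_subset by blast
  have spB': "module.span scale B' = UNIV"
    using B' B module.span_mono[OF vs[unfolded module_iff_vector_space[symmetric]], of B "module.span scale B'"]
      module.span_span[OF vs[unfolded module_iff_vector_space[symmetric]], of B'] by auto
  interpret fdla scale B' br
    apply (rule fdla.intro)
     apply (rule finite_dimensional_vector_space.intro[OF vs])
     apply (unfold_locales; (rule fB' B'(2) spB')?)
    using L by (auto simp: lie_algebra_def intro!: fdla_axioms.intro)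
  have aT: "subalg T" using assms(4) by (simp add: lie_subalgebra_def subalg_def)
  have nT: "\<forall>t\<in>T. nilp t" using assms(5) by (simp add: nil_on_def nilp_def ad_def)
  show ?thesis unfolding nil_on_def
  proof
    fix x assume "x \<in> set_sum S T"
    then obtain s t where x: "x = s + t" "s \<in> S" "t \<in> T" by (auto simp: set_sum_def)
    have ns: "nilp s" using assms(3) x by (simp add: nil_on_def nilp_def ad_def)
    have st: "\<forall>t\<in>T. br s t \<in> T"
      using assms(6) x(2) unfolding lie_bracket_set_def by (auto intro: span_base)
    show "\<exists>n. (ad br x ^^ n) = (\<lambda>_. 0)"
      using final[OF aT nT ns st x(3)] x(1) by (simp add: ad_def)
  qed
qed

end
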